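(* Let $|q|<1$ and let $(\alpha_n(a,q),\beta_n(a,q))$ be sequences depending on $a$ and base $q$ such that $(\alpha_n(a,q),\beta_n(a,q))$ and $(\alpha_n(-a,q),\beta_n(-a,q))$ are Bailey pairs with respect to $a$ and $-a$ respectively (base $q$), and $(\alpha_n(a^2,q^2),\beta_n(a^2,q^2))$ is a Bailey pair with respect to $a^2$ with base $q^2$. Assume $|qa|<|z|$, no denominator vanishes, and all series converge absolutely. Then \begin{multline*} \sum_{n=1}^{\infty} (z;q)_{n}(q;q)_{n-1} \left( \frac{q a}{ z}\right )^{n} \beta_n(a,q) + \sum_{n=1}^{\infty}(z;q)_{n}(q;q)_{n-1}\left( \frac{-q a}{ z }\right )^{n}\beta_n(-a,q) -2 \sum_{n=1}^{\infty}(z^2;q^2)_{n}(q^2;q^2)_{n-1}\left( \frac{q^2 a^2}{ z^2 }\right )^{n}\beta_n(a^2,q^2)\\ =\sum_{n=1}^{\infty}\frac{(z;q)_{n}(q;q)_{n-1}}{(q a ,q a/z;q)_n}\left (\frac{q a}{z}\right)^{n}\alpha_n(a,q) +\sum_{n=1}^{\infty}\frac{(z;q)_{n}(q;q)_{n-1}}{(-q a ,-q a/z;q)_n}\left (\frac{-q a}{z}\right)^{n}\alpha_n(-a,q) -2\sum_{n=1}^{\infty}\frac{(z^2;q^2)_{n}(q^2;q^2)_{n-1}}{(q^2 a^2 ,q^2a^2/z^2;q^2)_n}\left (\frac{q^2a^2}{z^2}\right)^{n}\alpha_n(a^2,q^2). \end{multline*}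
   Context: Notation: $(x;q)_n=(1-x)(1-xq)\cdots(1-xq^{n-1})$, $(x;q)_0=1$, $(x_1,\dots,x_m;q)_n=(x_1;q)_n\cdots(x_m;q)_n$. A Bailey pair with respect to $a$ (base $q$) is a pair of sequences $(\alpha_n,\beta_n)_{n\ge0}$ with $\alpha_0=\beta_0=1$ and, for $n>0$, $\beta_n=\sum_{j=0}^{n}\frac{\alpha_j}{(q;q)_{n-j}(aq;q)_{n+j}}$. *)

theory Defs
  imports "HOL-Analysis.Analysis"
begin

definition qpoch :: "complex \<Rightarrow> complex \<Rightarrow> nat \<Rightarrow> complex" where
  "qpoch x q n = (\<Prod>k<n. (1 - x * q ^ k))"

definition bailey_pair :: "complex \<Rightarrow> complex \<Rightarrow> (nat \<Rightarrow> complex) \<Rightarrow> (nat \<Rightarrow> complex) \<Rightarrow> bool" where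
  "bailey_pair a q \<alpha> \<beta> \<longleftrightarrow> \<alpha> 0 = 1 \<and> \<beta> 0 = 1 \<and>
     (\<forall>n>0. \<beta> n = (\<Sum>j\<le>n. \<alpha> j / (qpoch q q (n - j) * qpoch (a * q) q (n + j))))"

definition bterm :: "complex \<Rightarrow> complex \<Rightarrow> complex \<Rightarrow> (nat \<Rightarrow> complex) \<Rightarrow> nat \<Rightarrow> complex" where
  "bterm z a q \<beta> n = qpoch z q n * qpoch q q (n - 1) * (q * a / z) ^ n * \<beta> n"

definition aterm :: "complex \<Rightarrow> complex \<Rightarrow> complex \<Rightarrow> (nat \<Rightarrow> complex) \<Rightarrow> nat \<Rightarrow> complex" where
  "aterm z a q \<alpha> n = qpoch z q n * qpoch q q (n - 1) / (qpoch (q * a) q n * qpoch (q * a / z) q n)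
      * (q * a / z) ^ n * \<alpha> n"

end

theory Submission
  imports Defs
begin


lemma qpoch_0[simp]: "qpoch w q 0 = 1"
  by (simp add: qpoch_def)

lemma qpoch_Suc: "qpoch w q (Suc n) = qpoch w q n * (1 - w*q^n)"
  by (simp add: qpoch_def)

lemma qpoch_add: "qpoch w q (m+n) = qpoch w q m * qpoch (w*q^m) q n"
  by (induct n) (simp_all add: qpoch_Suc power_add mult_ac)

lemma qpoch_upper:
  assumes "norm q < 1"
  shows "norm (qpoch w q n) \<le> exp (norm w / (1 - norm q))"
proof -
  have "norm (qpoch w q n) \<le> (\<Prod>k<n. norm (1 - w*q^k))"
    unfolding qpoch_def by (rule norm_prod_le)
  also have "\<dots> \<le> (\<Prod>k<n. exp (norm w * norm q ^ k))"
  proof (rule prod_mono, safe)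
    fix k
    have "norm (1 - w*q^k) \<le> 1 + norm w * norm q ^ k"
      by (metis norm_mult norm_one norm_power norm_triangle_ineq4)
    also have "\<dots> \<le> exp (norm w * norm q ^ k)" by (rule exp_ge_add_one_self)
    finally show "norm (1 - w*q^k) \<le> exp (norm w * norm q ^ k)" .
  qed simp
  also have "\<dots> = exp (\<Sum>k<n. norm w * norm q ^ k)" by (simp add: exp_sum)
  also have "\<dots> \<le> exp (norm w / (1 - norm q))"
  proof -
    have "(\<Sum>k<n. norm w * norm q ^ k) = norm w * (1 - norm q ^ n) / (1 - norm q)"
      using assms by (simp add: sum_distrib_left[symmetric] sum_gp_strict)
    also have "\<dots> \<le> norm w / (1 - norm q)"
      using assms by (intro divide_right_mono) (auto simp: mult_left_le)
    finally show ?thesis by simp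
  qed
  finally show ?thesis .
qed

lemma weier:
  fixes e :: "nat \<Rightarrow> real"
  assumes "\<And>k. 0 \<le> e k" "\<And>k. e k \<le> 1"
  shows "1 - (\<Sum>k<m. e k) \<le> (\<Prod>k<m. 1 - e k)"
proof (induct m)
  case (Suc m)
  have "1 - (\<Sum>k<Suc m. e k) \<le> (1 - (\<Sum>k<m. e k)) * (1 - e m)"
    using assms sum_nonneg[of "{..<m}" e] by (simp add: algebra_simps)
  also have "\<dots> \<le> (\<Prod>k<m. 1 - e k) * (1 - e m)"
    using Suc assms[of m] by (intro mult_right_mono) auto
  finally show ?case by simp
qed simp

lemma qpoch_lower:
  assumes q: "norm q < 1" and nz: "\<forall>n. qpoch w q n \<noteq> 0"
  shows "\<exists>L>0. \<forall>n. L \<le> norm (qpoch w q n)"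
proof -
  let ?r = "norm q"
  have "(\<lambda>K. norm w * ?r ^ K / (1 - ?r)) \<longlonglongrightarrow> norm w * 0 / (1 - ?r)"
    using q by (intro tendsto_intros LIMSEQ_power_zero) auto
  then have "eventually (\<lambda>K. norm w * ?r ^ K / (1 - ?r) < 1/2) sequentially"
    by (rule order_tendstoD) simp
  then obtain K where K: "norm w * ?r ^ K / (1 - ?r) < 1/2"
    by (auto simp: eventually_sequentially)
  have low: "1/2 \<le> norm (qpoch (w*q^K) q m)" for m
  proof -
    have ek: "norm w * ?r ^ K * ?r ^ k \<le> 1/2" for k
    proof -
      have "norm w * ?r ^ K * ?r ^ k \<le> norm w * ?r ^ K"
        using q by (intro mult_left_le) (auto simp: power_le_one)
      also have "\<dots> \<le> norm w * ?r ^ K / (1 - ?r)"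
        using q by (simp add: le_divide_eq mult_left_le)
      finally show ?thesis using K by linarith
    qed
    have ek1: "norm w * ?r ^ K * ?r ^ k \<le> 1" for k using ek[of k] by linarith
    have "1 - (\<Sum>k<m. norm w * ?r ^ K * ?r ^ k) \<le> (\<Prod>k<m. 1 - norm w * ?r ^ K * ?r ^ k)"
      by (rule weier[OF _ ek1]) simp
    also have "\<dots> \<le> (\<Prod>k<m. norm (1 - w * q^K * q^k))"
    proof (rule prod_mono, safe)
      fix k
      show "0 \<le> 1 - norm w * ?r ^ K * ?r ^ k" using ek[of k] by linarith
      have "norm (w * q^K * q^k) = norm w * ?r ^ K * ?r ^ k"
        by (simp add: norm_mult norm_power)
      then show "1 - norm w * ?r ^ K * ?r ^ k \<le> norm (1 - w * q^K * q^k)"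
        by (metis norm_one norm_triangle_ineq2)
    qed
    also have "\<dots> = norm (qpoch (w*q^K) q m)"
      unfolding qpoch_def by (simp add: prod_norm mult.assoc)
    finally have A: "1 - (\<Sum>k<m. norm w * ?r ^ K * ?r ^ k) \<le> norm (qpoch (w*q^K) q m)" .
    have "(\<Sum>k<m. norm w * ?r ^ K * ?r ^ k) = norm w * ?r ^ K * (1 - ?r^m) / (1 - ?r)"
      using q by (simp add: sum_distrib_left[symmetric] sum_gp_strict)
    also have "\<dots> \<le> norm w * ?r ^ K / (1 - ?r)"
      using q by (intro divide_right_mono) (auto simp: mult_left_le)
    finally show ?thesis using A K by linarith
  qed
  define L0 where "L0 = Min ((\<lambda>n. norm (qpoch w q n)) ` {..K})"
  have L0pos: "L0 > 0" unfolding L0_def using nz by (subst Min_gr_iff) auto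
  have L0le: "n \<le> K \<Longrightarrow> L0 \<le> norm (qpoch w q n)" for n
    unfolding L0_def by (rule Min_le) auto
  define L where "L = min L0 (norm (qpoch w q K) / 2)"
  have "L > 0" using L0pos nz unfolding L_def by auto
  moreover have "L \<le> norm (qpoch w q n)" for n
  proof (cases "n \<le> K")
    case True then show ?thesis using L0le unfolding L_def by fastforce
  next
    case False
    then have "n = K + (n - K)" by simp
    then have "qpoch w q n = qpoch w q K * qpoch (w*q^K) q (n-K)"
      by (metis qpoch_add)
    then have "norm (qpoch w q n) = norm (qpoch w q K) * norm (qpoch (w*q^K) q (n-K))"
      by (simp add: norm_mult)
    moreover have "norm (qpoch w q K) * (1/2) \<le> norm (qpoch w q K) * norm (qpoch (w*q^K) q (n-K))"
      using low by (intro mult_left_mono) auto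
    ultimately show ?thesis unfolding L_def by auto
  qed
  ultimately show ?thesis by blast
qed



definition ss :: "complex \<Rightarrow> complex \<Rightarrow> complex \<Rightarrow> nat \<Rightarrow> nat \<Rightarrow> complex" where
 "ss a q z i m = qpoch z q (Suc i + m)  *  qpoch q q (i+m)  *  (q * a/z)^(Suc i+m)
     / (qpoch q q m  *  qpoch (a * q) q (2 * Suc i + m))"
definition ccf :: "complex \<Rightarrow> complex \<Rightarrow> complex \<Rightarrow> nat \<Rightarrow> complex" where
 "ccf a q z j = qpoch z q j  *  qpoch q q (j-1)  *  (q * a/z)^j / (qpoch (q * a) q j  *  qpoch (q * a/z) q j)"
definition tz :: "complex \<Rightarrow> complex \<Rightarrow> complex \<Rightarrow> nat \<Rightarrow> complex" where
 "tz a q z n = qpoch z q n  *  qpoch q q (n-1)  *  (q * a/z)^n / (qpoch q q n  *  qpoch (a * q) q n)"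

lemma qpoch_upper':
  assumes "norm q < 1" "norm w \<le> R"
  shows "norm (qpoch w q n) \<le> exp (R / (1 - norm q))"
  using qpoch_upper[OF assms(1), of w n] assms by (smt (verit) divide_right_mono exp_le_cancel_iff)

lemma qpoch_qq_nz: "norm q < 1 \<Longrightarrow> qpoch q q n \<noteq> 0"
proof -
  assume q: "norm q < 1"
  have "1 - q  *  q^k \<noteq> 0" for k
  proof
    assume "1 - q * q^k = 0"
    then have "norm (q * q^k) = 1" by (metis eq_iff_diff_eq_0 norm_one)
    moreover have "norm (q * q^k) < 1" using q
      by (simp add: norm_mult norm_power power_less_one_iff flip: power_Suc)
    ultimately show False by simp
  qed
  then show ?thesis unfolding qpoch_def by simp
qed

lemma frac_lemma:
  fixes Nr Dr D P N1 x :: complex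
  assumes "Dr \<noteq> 0" "D \<noteq> 0" "x - 1 \<noteq> 0" "(Nr * D - P * Dr) * (x - 1) = (Nr - Dr) * (N1 - P * D)"
  shows "Nr/Dr - P/D = (Nr/Dr - 1)/(x - 1)  *  (N1/D - P)"
proof -
  have "Nr/Dr - P/D = (Nr * D - P * Dr)/(Dr * D)" using assms by (simp add: diff_frac_eq)
  also have "\<dots> = (Nr * D - P * Dr) * (x-1)/((x-1) * (Dr * D))" using assms(3) by simp
  also have "\<dots> = (Nr - Dr) * (N1 - P * D)/((x-1) * (Dr * D))" using assms(4) by simp
  also have "\<dots> = (Nr/Dr - 1)/(x - 1)  *  (N1/D - P)" using assms(1-3)
    by (simp add: divide_simps)
  finally show ?thesis .
qed

lemma scalA:
  fixes q x z u v :: complex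
  assumes x1: "x - 1 \<noteq> 0" and d1: "(1 - x * z * q *  v) * (1 - x * q *  v) \<noteq> 0"
    and d3: "1 - q^2 * u \<noteq> 0" and d4: "1 - x * z * q^3 *  v^2 * u \<noteq> 0"
  shows "(1 - z * q *  v) * (1 - q *  v) * x/((1 - x * z * q *  v) * (1 - x * q *  v)) - (1 - q * u)/(1 - x * z * q^3 *  v^2 * u)
     = ((1 - z * q *  v) * (1 - q *  v) * x/((1 - x * z * q *  v) * (1 - x * q *  v)) - 1)/(x - 1)  * 
       ((1 - z * q^2 *  v * u) * (1 - q^2 *  v * u) * x/((1 - q^2 * u) * (1 - x * z * q^3 *  v^2 * u))  *  (1 - q^2 * u) - (1 - q * u))"
proof -
  have e: "(1 - z * q^2 *  v * u) * (1 - q^2 *  v * u) * x/((1 - q^2 * u) * (1 - x * z * q^3 *  v^2 * u))  *  (1 - q^2 * u)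
     = (1 - z * q^2 *  v * u) * (1 - q^2 *  v * u) * x/(1 - x * z * q^3 *  v^2 * u)" using d3 by simp
  have p: "((1 - z * q *  v) * (1 - q *  v) * x * (1 - x * z * q^3 *  v^2 * u) - (1 - q * u) * ((1 - x * z * q *  v) * (1 - x * q *  v))) * (x - 1)
  = ((1 - z * q *  v) * (1 - q *  v) * x - (1 - x * z * q *  v) * (1 - x * q *  v)) * ((1 - z * q^2 *  v * u) * (1 - q^2 *  v * u) * x - (1 - q * u) * (1 - x * z * q^3 *  v^2 * u))"
    by algebra
  show ?thesis unfolding e
    by (rule frac_lemma[OF d1 d4 x1 p])
qed

lemma scalB:
  fixes q x z v :: complex
  assumes x1: "x - 1 \<noteq> 0" and d1: "(1 - x * z * q *  v) * (1 - x * q *  v) \<noteq> 0"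
    and d4: "1 - x * z * q^2 *  v^2 \<noteq> 0"
  shows "(1 - z * q *  v) * (1 - q *  v) * x/((1 - x * z * q *  v) * (1 - x * q *  v))
     = ((1 - z * q *  v) * (1 - q *  v) * x/((1 - x * z * q *  v) * (1 - x * q *  v)) - 1)/(x - 1)  * 
       ((1 - z * q *  v) * (1 - q *  v) * x/(1 - x * z * q^2 *  v^2))"
proof -
  have p: "((1 - z * q *  v) * (1 - q *  v) * x * (1 - x * z * q^2 *  v^2) - 0 * ((1 - x * z * q *  v) * (1 - x * q *  v))) * (x - 1)
    = ((1 - z * q *  v) * (1 - q *  v) * x - (1 - x * z * q *  v) * (1 - x * q *  v)) * ((1 - z * q *  v) * (1 - q *  v) * x - 0 * (1 - x * z * q^2 *  v^2))"
    by algebra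
  show ?thesis using frac_lemma[OF d1 d4 x1 p] by simp
qed

definition rho :: "complex \<Rightarrow> complex \<Rightarrow> complex \<Rightarrow> nat \<Rightarrow> complex" where
 "rho a q z i = (1 - z * q * q^i) * (1 - q * q^i) * (q * a/z)/((1 - (q * a/z) * z * q * q^i) * (1 - (q * a/z) * q * q^i))"
definition kap :: "complex \<Rightarrow> complex \<Rightarrow> complex \<Rightarrow> nat \<Rightarrow> complex" where
 "kap a q z i = (rho a q z i - 1)/(q * a/z - 1)"
definition HH :: "complex \<Rightarrow> complex \<Rightarrow> complex \<Rightarrow> nat \<Rightarrow> nat \<Rightarrow> complex" where
 "HH a q z i m = kap a q z i  *  ss a q z i m  *  (1 - q^m)"

locale setting =
  fixes a q z :: complex
  assumes q: "norm q < 1" and hz: "norm (q * a) < norm z"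
    and nzA: "\<And>n. qpoch (a * q) q n \<noteq> 0" and nzX: "\<And>n. qpoch (q * a/z) q n \<noteq> 0"
begin

lemma z0[simp]: "z \<noteq> 0" using hz by auto

lemma xnorm: "norm (q * a/z) < 1"
  using hz z0 by (simp add: norm_divide divide_less_eq)

lemma x1: "q * a/z - 1 \<noteq> 0" "1 - q * a/z \<noteq> 0"
proof -
  have "q * a/z \<noteq> 1" using xnorm by (metis norm_one order_less_irrefl)
  then show "q * a/z - 1 \<noteq> 0" "1 - q * a/z \<noteq> 0" by (simp_all only: right_minus_eq) auto
qed

lemma xz: "a * q = (q * a/z) * z" using z0 by simp

lemma qqnz[simp]: "qpoch q q n \<noteq> 0" using qpoch_qq_nz[OF q] .
lemma nzA'[simp]: "qpoch (a * q) q n \<noteq> 0" "qpoch (q * a) q n \<noteq> 0" using nzA[of n] by (auto simp: mult.commute)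
lemma nzX'[simp]: "qpoch (q * a/z) q n \<noteq> 0" using nzX by auto

lemma fA: "1 - a * q * q^k \<noteq> 0"
  using nzA[of "Suc k"] by (simp add: qpoch_Suc)
lemma fX: "1 - q * a/z * q^k \<noteq> 0"
  using nzX[of "Suc k"] by (simp add: qpoch_Suc)
lemma fQ: "1 - q * q^k \<noteq> 0"
  using qqnz[of "Suc k"] by (simp add: qpoch_Suc)


lemma ss_Suc: "ss a q z i (Suc m) = ss a q z i m  *  ((1 - z * q^(Suc i+m)) * (1 - q * q^(i+m)) * (q * a/z)
    / ((1 - q * q^m) * (1 - a * q * q^(2 * Suc i+m))))"
proof -
  have e: "Suc i + Suc m = Suc (Suc i + m)" "i + Suc m = Suc (i+m)" "2 * Suc i + Suc m = Suc (2 * Suc i+m)"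
    by simp_all
  show ?thesis unfolding ss_def e qpoch_Suc power_Suc
    using fQ[of m] fA[of "2 * Suc i+m"] by (simp add: field_simps)
qed

lemma ss_shift: "ss a q z (Suc i) m = ss a q z i (Suc m) * (1 - q * q^m) / (1 - a * q * q^(2 * Suc i + Suc m))"
proof -
  define Nn where "Nn = qpoch z q (Suc i + Suc m) * qpoch q q (i + Suc m) * (q * a/z)^(Suc i + Suc m)"
  have e1: "Suc (Suc i) + m = Suc i + Suc m" and e2: "Suc i + m = i + Suc m"
    and e3: "2 * Suc (Suc i) + m = Suc (2 * Suc i + Suc m)" by simp_all
  have L: "ss a q z (Suc i) m = Nn / (qpoch q q m * (qpoch (a * q) q (2 * Suc i + Suc m) * (1 - a * q * q^(2 * Suc i+Suc m))))"
    unfolding ss_def e1 e2 e3 qpoch_Suc[of "a * q" q "2 * Suc i + Suc m"] Nn_def ..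
  have R: "ss a q z i (Suc m) = Nn / (qpoch q q m * (1 - q * q^m) * qpoch (a * q) q (2 * Suc i + Suc m))"
    unfolding ss_def qpoch_Suc[of q q m] Nn_def ..
  have h1: "N / (Q * c * A) * c / d = N / (Q * (A * d))" if "c \<noteq> 0" for N Q c A d :: complex
    using that by (cases "Q = 0"; cases "A = 0"; cases "d = 0"; simp add: field_simps)
  show ?thesis unfolding L R using h1[OF fQ[of m]] by simp
qed

lemma ccf_Suc: "ccf a q z (Suc (Suc i)) = ccf a q z (Suc i) * rho a q z i"
  by (simp add: ccf_def rho_def qpoch_Suc power_Suc mult_ac)

lemma tele_step: "rho a q z i  *  ss a q z i (Suc m) - ss a q z (Suc i) m
    = HH a q z i (Suc (Suc m)) - HH a q z i (Suc m)"
proof -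
  define x where "x = q * a/z"
  define u where "u = (q::complex)^m"
  define v where "v = (q::complex)^i"
  have d1: "(1 - x * z * q *  v) * (1 - x * q *  v) \<noteq> 0"
    using fA[of "Suc i"] fX[of "Suc i"] z0 unfolding x_def v_def by (auto simp: mult_ac)
  have d3: "1 - q^2 * u \<noteq> 0" using fQ[of "Suc m"] unfolding u_def by (simp add: power2_eq_square mult_ac)
  have d4: "1 - x * z * q^3 *  v^2 * u \<noteq> 0" using fA[of "2 * Suc i+Suc m"] z0 unfolding x_def v_def u_def
    by (simp add: power_add power_mult power2_eq_square power3_eq_cube mult_ac)
  note sc = scalA[OF x1(1)[folded x_def] d1 d3 d4]
  have r1: "(1 - z * q^(Suc i+Suc m)) * (1 - q * q^(i+Suc m)) * (q * a/z) / ((1 - q * q^Suc m) * (1 - a * q * q^(2 * Suc i+Suc m)))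
     = (1 - z * q^2 *  v * u) * (1 - q^2 *  v * u) * x/((1 - q^2 * u) * (1 - x * z * q^3 *  v^2 * u))"
    unfolding x_def u_def v_def using z0
    by (simp add: power_add power_mult power2_eq_square power3_eq_cube mult_ac)
  have r2: "(1 - q * q^m) / (1 - a * q * q^(2 * Suc i + Suc m)) = (1 - q * u)/(1 - x * z * q^3 *  v^2 * u)"
    unfolding x_def u_def v_def using z0
    by (simp add: power_add power_mult power2_eq_square power3_eq_cube mult_ac)
  have rh: "rho a q z i = (1 - z * q *  v) * (1 - q *  v) * x/((1 - x * z * q *  v) * (1 - x * q *  v))"
    unfolding rho_def x_def v_def by (simp add: mult_ac)
  have k: "kap a q z i = (rho a q z i - 1)/(x - 1)" unfolding kap_def x_def ..
  have qq: "q^Suc (Suc m) = q^2 * u" "q^Suc m = q * u" unfolding u_def by (simp_all add: power2_eq_square)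
  define R1 where "R1 = (1 - z * q^2 * v * u) * (1 - q^2 * v * u) * x/((1 - q^2 * u) * (1 - x * z * q^3 * v^2 * u))"
  define R2 where "R2 = (1 - q * u)/(1 - x * z * q^3 * v^2 * u)"
  define S where "S = ss a q z i (Suc m)"
  have E1: "ss a q z i (Suc (Suc m)) = S * R1" unfolding S_def R1_def
    using ss_Suc[of i "Suc m"] by (simp only: r1)
  have E2: "ss a q z (Suc i) m = S * R2"
  proof -
    have "ss a q z (Suc i) m = S * ((1 - q * q^m) / (1 - a * q * q^(2 * Suc i + Suc m)))"
      unfolding S_def ss_shift by simp
    then show ?thesis unfolding R2_def by (simp only: r2)
  qed
  have sc': "rho a q z i - R2 = kap a q z i * (R1 * (1 - q^Suc (Suc m)) - (1 - q^Suc m))"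
    unfolding R1_def R2_def rh k qq using sc by simp
  have "rho a q z i * S - S * R2 = S * (rho a q z i - R2)" by (simp add: algebra_simps)
  also have "\<dots> = kap a q z i * (S * R1) * (1 - q^Suc (Suc m)) - kap a q z i * S * (1 - q^Suc m)"
    unfolding sc' by (simp add: algebra_simps)
  finally show ?thesis unfolding HH_def E1 E2 S_def .
qed


lemma tele_0: "rho a q z i * ss a q z i 0 = HH a q z i 1"
proof -
  define x where "x = q * a/z"
  define v where "v = (q::complex)^i"
  have d1: "(1 - x * z * q * v) * (1 - x * q * v) \<noteq> 0"
    using fA[of "Suc i"] fX[of "Suc i"] z0 unfolding x_def v_def by (auto simp: mult_ac)
  have d4: "1 - x * z * q^2 * v^2 \<noteq> 0" using fA[of "2 * Suc i"] z0 unfolding x_def v_def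
    by (simp add: power_add power_mult power2_eq_square mult_ac)
  note sc = scalB[OF x1(1)[folded x_def] d1 d4]
  have rh: "rho a q z i = (1 - z * q * v) * (1 - q * v) * x/((1 - x * z * q * v) * (1 - x * q * v))"
    unfolding rho_def x_def v_def by (simp add: mult_ac)
  have k: "kap a q z i = (rho a q z i - 1)/(x - 1)" unfolding kap_def x_def ..
  have r0: "(1 - z * q^(Suc i+0)) * (1 - q * q^(i+0)) * (q * a/z) / ((1 - q * q^0) * (1 - a * q * q^(2 * Suc i+0)))
     = (1 - z * q * v) * (1 - q * v) * x/((1 - q) * (1 - x * z * q^2 * v^2))"
    unfolding x_def v_def using z0
    by (simp add: power_add power_mult power2_eq_square mult_ac)
  have q1: "1 - q \<noteq> 0" using fQ[of 0] by simp
  have E: "ss a q z i 1 = ss a q z i 0 * ((1 - z * q * v) * (1 - q * v) * x/((1 - q) * (1 - x * z * q^2 * v^2)))"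
    using ss_Suc[of i 0] by (simp only: r0 One_nat_def)
  define N where "N = (1 - z * q * v) * (1 - q * v) * x"
  define D where "D = 1 - x * z * q^2 * v^2"
  have e2: "N / ((1 - q) * D) * (1 - q^1) = N / D" using q1 by simp
  have kk: "kap a q z i * (N / D) = rho a q z i" unfolding k rh N_def D_def using sc by simp
  have "HH a q z i 1 = kap a q z i * ss a q z i 0 * (N / ((1 - q) * D) * (1 - q^1))"
    unfolding HH_def E N_def D_def by (simp only: mult_ac)
  also have "\<dots> = rho a q z i * ss a q z i 0" unfolding e2 kk[symmetric] by (simp only: mult_ac)
  finally show ?thesis by simp
qed

definition La where "La = (SOME L. L > 0 \<and> (\<forall>n. L \<le> norm (qpoch (a * q) q n)))"
definition Lq where "Lq = (SOME L. L > 0 \<and> (\<forall>n. L \<le> norm (qpoch q q n)))"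

lemma La: "La > 0" "La \<le> norm (qpoch (a * q) q n)"
proof -
  have "\<exists>L. L > 0 \<and> (\<forall>n. L \<le> norm (qpoch (a * q) q n))"
    using qpoch_lower[OF q] nzA by blast
  from someI_ex[OF this] show "La > 0" "La \<le> norm (qpoch (a * q) q n)" unfolding La_def by auto
qed

lemma Lq: "Lq > 0" "Lq \<le> norm (qpoch q q n)"
proof -
  have "\<exists>L. L > 0 \<and> (\<forall>n. L \<le> norm (qpoch q q n))"
    using qpoch_lower[OF q] qqnz by blast
  from someI_ex[OF this] show "Lq > 0" "Lq \<le> norm (qpoch q q n)" unfolding Lq_def by auto
qed

lemma ss0_sums: "(\<lambda>m. ss a q z 0 m) sums ccf a q z 1"
proof -
  define x where "x = q * a/z"
  define V where "V n = qpoch z q n * x^n / qpoch (a * q) q n" for n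
  have tel: "(1 - x) * ss a q z 0 m = V (Suc m) - V (Suc (Suc m))" for m
  proof -
    define P where "P = qpoch z q (Suc m) * x^(Suc m) / qpoch (a * q) q (Suc m)"
    define c where "c = q^Suc m"
    have dc: "1 - x * z * c \<noteq> 0" using fA[of "Suc m"] unfolding x_def c_def by (simp add: mult_ac)
    have A: "ss a q z 0 m = P / (1 - x * z * c)"
      unfolding ss_def P_def c_def x_def by (simp add: qpoch_Suc mult_ac)
    have B: "V (Suc m) = P" unfolding V_def P_def ..
    have C: "V (Suc (Suc m)) = P * ((1 - z * c) * x/(1 - x * z * c))"
      unfolding V_def P_def c_def x_def by (simp add: qpoch_Suc mult_ac)
    show ?thesis unfolding A B C using dc by (simp add: field_simps)
  qed
  have x1': "1 - x \<noteq> 0" using x1 unfolding x_def by simp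
  have part: "(\<Sum>m<M. ss a q z 0 m) = (V 1 - V (Suc M)) / (1 - x)" for M
  proof -
    have "(1 - x) * (\<Sum>m<M. ss a q z 0 m) = V 1 - V (Suc M)"
      unfolding sum_distrib_left tel by (subst sum_lessThan_telescope'[of "\<lambda>m. V (Suc m)"]) simp
    then show ?thesis using x1' by (simp add: field_simps)
  qed
  have V0: "V \<longlonglongrightarrow> 0"
  proof (rule Lim_null_comparison)
    show "eventually (\<lambda>n. norm (V n) \<le> exp (norm z / (1 - norm q)) / La * norm x ^ n) sequentially"
    proof (rule always_eventually, rule allI)
      fix n
      have "norm (V n) = norm (qpoch z q n) * norm x ^ n / norm (qpoch (a * q) q n)"
        unfolding V_def by (simp add: norm_mult norm_divide norm_power)
      also have "\<dots> \<le> exp (norm z / (1 - norm q)) * norm x ^ n / La"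
        using La qpoch_upper[OF q, of z n]
        by (intro frac_le mult_right_mono) auto
      finally show "norm (V n) \<le> exp (norm z / (1 - norm q)) / La * norm x ^ n" by simp
    qed
    show "(\<lambda>n. exp (norm z / (1 - norm q)) / La * norm x ^ n) \<longlonglongrightarrow> 0"
      using xnorm unfolding x_def by (intro tendsto_mult_right_zero LIMSEQ_power_zero) simp
  qed
  have "(\<lambda>M. (V 1 - V (Suc M)) / (1 - x)) \<longlonglongrightarrow> (V 1 - 0) / (1 - x)"
    by (intro tendsto_intros LIMSEQ_Suc[OF V0] x1')
  moreover have "(V 1 - 0) / (1 - x) = ccf a q z 1"
    unfolding V_def ccf_def x_def by (simp add: mult_ac qpoch_def)
  ultimately show ?thesis unfolding sums_def part by simp
qed

lemma ss_sums: "(\<lambda>m. ss a q z i m) sums ccf a q z (Suc i)"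
proof (induct i)
  case 0 then show ?case using ss0_sums by simp
next
  case (Suc i)
  have part: "(\<Sum>m<M. ss a q z (Suc i) m) = rho a q z i * (\<Sum>m<Suc M. ss a q z i m) - HH a q z i (Suc M)" for M
  proof -
    have "(\<Sum>m<M. ss a q z (Suc i) m) = (\<Sum>m<M. rho a q z i * ss a q z i (Suc m) - (HH a q z i (Suc (Suc m)) - HH a q z i (Suc m)))"
      by (rule sum.cong) (auto simp: tele_step[symmetric])
    also have "\<dots> = rho a q z i * (\<Sum>m<M. ss a q z i (Suc m)) - (\<Sum>m<M. HH a q z i (Suc (Suc m)) - HH a q z i (Suc m))"
      by (simp add: sum_subtractf sum_distrib_left)
    also have "(\<Sum>m<M. HH a q z i (Suc (Suc m)) - HH a q z i (Suc m)) = HH a q z i (Suc M) - HH a q z i 1"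
      by (induct M) auto
    also have "(\<Sum>m<M. ss a q z i (Suc m)) = (\<Sum>m<Suc M. ss a q z i m) - ss a q z i 0"
      by (subst sum.lessThan_Suc_shift) simp
    finally show ?thesis using tele_0[of i] by (simp add: algebra_simps)
  qed
  have z1: "(\<lambda>n. ss a q z i n) \<longlonglongrightarrow> 0" using Suc summable_LIMSEQ_zero sums_summable by blast
  have "(\<lambda>M. HH a q z i (Suc M)) \<longlonglongrightarrow> kap a q z i * 0 * (1 - 0)"
    unfolding HH_def by (intro tendsto_intros LIMSEQ_Suc[OF z1] LIMSEQ_Suc[OF LIMSEQ_power_zero] q)
  moreover have "(\<lambda>M. \<Sum>m<Suc M. ss a q z i m) \<longlonglongrightarrow> ccf a q z (Suc i)"
    using Suc unfolding sums_def by (rule LIMSEQ_Suc)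
  ultimately have "(\<lambda>M. rho a q z i * (\<Sum>m<Suc M. ss a q z i m) - HH a q z i (Suc M))
     \<longlonglongrightarrow> rho a q z i * ccf a q z (Suc i) - kap a q z i * 0 * (1 - 0)"
    by (intro tendsto_intros)
  then show ?case unfolding sums_def part by (simp add: ccf_Suc mult_ac)
qed

end


lemma swap_tri:
  fixes g :: "nat \<Rightarrow> nat \<Rightarrow> complex"
  shows "(\<Sum>k<N. \<Sum>i\<le>k. g i (k - i)) = (\<Sum>i<N. \<Sum>m<N - i. g i m)"
proof (induct N)
  case (Suc N)
  have "(\<Sum>i<Suc N. \<Sum>m<Suc N - i. g i m) = (\<Sum>i<Suc N. (\<Sum>m<N - i. g i m) + (if i \<le> N then g i (N - i) else 0))"
  proof (rule sum.cong)
    fix i assume "i \<in> {..<Suc N}"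
    then have "Suc N - i = Suc (N - i)" by auto
    then show "(\<Sum>m<Suc N - i. g i m) = (\<Sum>m<N - i. g i m) + (if i \<le> N then g i (N - i) else 0)"
      using \<open>i \<in> {..<Suc N}\<close> by auto
  qed simp
  also have "\<dots> = (\<Sum>i<Suc N. \<Sum>m<N - i. g i m) + (\<Sum>i\<le>N. g i (N - i))"
    by (simp add: sum.distrib lessThan_Suc_atMost)
  also have "(\<Sum>i<Suc N. \<Sum>m<N - i. g i m) = (\<Sum>i<N. \<Sum>m<N - i. g i m)"
    by simp
  finally show ?case using Suc by simp
qed simp

context setting
begin

lemma nzX''[simp]: "qpoch (a*q/z) q n \<noteq> 0" using nzX[of n] by (simp add: mult.commute)

lemma qq_le1: "norm q * norm q ^ i \<le> 1"
  using q by (intro mult_le_one) (auto simp: power_le_one)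

definition Mb where "Mb = exp (norm z / (1 - norm q)) * exp (1 / (1 - norm q)) * exp (norm (q*a) / (1 - norm q))
   * exp (norm (q*a/z) / (1 - norm q)) / (Lq * La)"

lemma Mb_pos: "Mb > 0" unfolding Mb_def using La Lq by simp

lemma ss_factor: "ss a q z i m = ccf a q z (Suc i) * (q*a/z)^m *
   (qpoch (z*q^Suc i) q m * qpoch (q*q^i) q m * qpoch (q*a) q (Suc i) * qpoch (q*a/z) q (Suc i))
   / (qpoch q q m * qpoch (a*q) q (2*Suc i + m))"
  unfolding ss_def ccf_def qpoch_add power_add by (simp add: field_simps)

lemma ss_bound: "norm (ss a q z i m) \<le> Mb * norm (ccf a q z (Suc i)) * norm (q*a/z) ^ m"
proof -
  let ?r = "norm q"
  define E where "E R = exp (R / (1 - ?r))" for R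
  have n1: "norm (qpoch (z*q^Suc i) q m) \<le> E (norm z)" unfolding E_def
    using q qq_le1[of i] by (intro qpoch_upper') (auto simp: norm_mult norm_power intro!: mult_left_le)
  have n2: "norm (qpoch (q*q^i) q m) \<le> E 1" unfolding E_def
    using q qq_le1[of i] by (intro qpoch_upper') (auto simp: norm_mult norm_power)
  have n3: "norm (qpoch (q*a) q (Suc i)) \<le> E (norm (q*a))" unfolding E_def using q by (intro qpoch_upper') auto
  have n4: "norm (qpoch (q*a/z) q (Suc i)) \<le> E (norm (q*a/z))" unfolding E_def using q by (intro qpoch_upper') auto
  define e1 where "e1 = E (norm z)"
  define e2 where "e2 = E 1"
  define e3 where "e3 = E (norm (q*a))"
  define e4 where "e4 = E (norm (q*a/z))"
  have epos: "0 \<le> e1" "0 \<le> e2" "0 \<le> e3" "0 \<le> e4" unfolding e1_def e2_def e3_def e4_def E_def by auto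
  have num: "norm (qpoch (z*q^Suc i) q m * qpoch (q*q^i) q m * qpoch (q*a) q (Suc i) * qpoch (q*a/z) q (Suc i))
      \<le> e1 * e2 * e3 * e4"
    unfolding norm_mult using epos by (intro mult_mono n1[folded e1_def] n2[folded e2_def] n3[folded e3_def] n4[folded e4_def]) auto
  have den: "Lq * La \<le> norm (qpoch q q m * qpoch (a*q) q (2*Suc i + m))"
    unfolding norm_mult using La Lq by (intro mult_mono) auto
  have fr: "norm ((qpoch (z*q^Suc i) q m * qpoch (q*q^i) q m * qpoch (q*a) q (Suc i) * qpoch (q*a/z) q (Suc i))
   / (qpoch q q m * qpoch (a*q) q (2*Suc i + m))) \<le> Mb"
  proof -
    have Mbe: "Mb = e1 * e2 * e3 * e4 / (Lq * La)" unfolding Mb_def e1_def e2_def e3_def e4_def E_def ..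
    show ?thesis unfolding norm_divide Mbe
      by (rule frac_le[OF _ num _ den]) (use epos La Lq in auto)
  qed
  have "norm (ss a q z i m) = norm (ccf a q z (Suc i)) * norm (q*a/z) ^ m * norm ((qpoch (z*q^Suc i) q m * qpoch (q*q^i) q m * qpoch (q*a) q (Suc i) * qpoch (q*a/z) q (Suc i))
   / (qpoch q q m * qpoch (a*q) q (2*Suc i + m)))"
    unfolding ss_factor by (simp add: norm_mult norm_power norm_divide)
  also have "\<dots> \<le> norm (ccf a q z (Suc i)) * norm (q*a/z) ^ m * Mb"
    by (intro mult_left_mono fr) auto
  finally show ?thesis by (simp add: mult_ac)
qed

lemma tail_bound: "norm (ccf a q z (Suc i) - (\<Sum>m<K. ss a q z i m))
   \<le> Mb * norm (ccf a q z (Suc i)) * norm (q*a/z) ^ K / (1 - norm (q*a/z))"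
proof -
  let ?c = "Mb * norm (ccf a q z (Suc i)) * norm (q*a/z) ^ K"
  have s1: "(\<lambda>m. ss a q z i (m + K)) sums (ccf a q z (Suc i) - (\<Sum>m<K. ss a q z i m))"
    by (rule sums_split_initial_segment[OF ss_sums])
  have g: "(\<lambda>m. ?c * norm (q*a/z) ^ m) sums (?c * (1 / (1 - norm (q*a/z))))"
    by (rule sums_mult, rule geometric_sums) (use xnorm in simp)
  have "norm (ccf a q z (Suc i) - (\<Sum>m<K. ss a q z i m)) = norm (\<Sum>m. ss a q z i (m + K))"
    using sums_unique[OF s1] by simp
  also have "\<dots> \<le> (\<Sum>m. ?c * norm (q*a/z) ^ m)"
  proof (rule norm_suminf_le)
    fix m show "norm (ss a q z i (m + K)) \<le> ?c * norm (q*a/z) ^ m"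
      using ss_bound[of i "m+K"] by (simp add: power_add mult_ac)
  qed (use g in \<open>rule sums_summable\<close>)
  also have "\<dots> = ?c * (1 / (1 - norm (q*a/z)))" using sums_unique[OF g] by simp
  finally show ?thesis by simp
qed

definition Mt where "Mt = exp (norm z / (1 - norm q)) * exp (1 / (1 - norm q)) / (Lq * La)"

lemma tz_bound: "norm (tz a q z n) \<le> Mt * norm (q*a/z) ^ n"
proof -
  have n1: "norm (qpoch z q n) \<le> exp (norm z / (1 - norm q))" using qpoch_upper[OF q] .
  have n2: "norm (qpoch q q (n-1)) \<le> exp (1 / (1 - norm q))" using q by (intro qpoch_upper') auto
  have num: "norm (qpoch z q n) * norm (qpoch q q (n-1)) \<le> exp (norm z / (1 - norm q)) * exp (1 / (1 - norm q))"
    by (intro mult_mono n1 n2) auto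
  have den: "Lq * La \<le> norm (qpoch q q n) * norm (qpoch (a*q) q n)"
    using La Lq by (intro mult_mono) auto
  have Fle: "norm (qpoch z q n) * norm (qpoch q q (n-1)) / (norm (qpoch q q n) * norm (qpoch (a*q) q n)) \<le> Mt"
    unfolding Mt_def using num den La Lq by (intro frac_le) auto
  have Feq: "norm (tz a q z n) = norm (qpoch z q n) * norm (qpoch q q (n-1)) / (norm (qpoch q q n) * norm (qpoch (a*q) q n)) * norm (q*a/z)^n"
    unfolding tz_def by (simp add: norm_mult norm_divide norm_power)
  show ?thesis by (simp only: Feq) (rule mult_right_mono[OF Fle]; simp)
qed

lemma tz_summable: "summable (\<lambda>n. norm (tz a q z n))"
  by (rule summable_comparison_test[OF _ summable_mult[OF summable_geometric[of "norm (q*a/z)"]]])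
     (use tz_bound xnorm in auto)


lemma aterm_eq: "aterm z a q \<alpha> n = \<alpha> n * ccf a q z n"
  unfolding aterm_def ccf_def by (simp add: divide_inverse mult_ac)

lemma ss_eq: "i \<le> k \<Longrightarrow> ss a q z i (k - i) = qpoch z q (Suc k) * qpoch q q k * (q*a/z)^Suc k
   / (qpoch q q (Suc k - Suc i) * qpoch (a*q) q (Suc k + Suc i))"
proof -
  assume ik: "i \<le> k"
  have e: "Suc i + (k-i) = Suc k" "i + (k-i) = k" "2*Suc i + (k-i) = Suc k + Suc i" "Suc k - Suc i = k - i"
    using ik by auto
  show ?thesis unfolding ss_def by (simp only: e)
qed

lemma bterm_eq:
  assumes bp: "bailey_pair a q \<alpha> \<beta>"
  shows "bterm z a q \<beta> (Suc k) = tz a q z (Suc k) + (\<Sum>i\<le>k. \<alpha> (Suc i) * ss a q z i (k - i))"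
proof -
  define P where "P = qpoch z q (Suc k) * qpoch q q k * (q*a/z)^Suc k"
  define f where "f j = \<alpha> j / (qpoch q q (Suc k - j) * qpoch (a*q) q (Suc k + j))" for j
  have b: "\<beta> (Suc k) = (\<Sum>j\<le>Suc k. f j)" using bp unfolding bailey_pair_def f_def by auto
  have a0: "\<alpha> 0 = 1" using bp unfolding bailey_pair_def by auto
  have "bterm z a q \<beta> (Suc k) = P * (\<Sum>j\<le>Suc k. f j)" unfolding bterm_def P_def b by simp
  also have "\<dots> = P * f 0 + (\<Sum>i\<le>k. P * f (Suc i))"
    by (subst sum.atMost_Suc_shift) (simp add: sum_distrib_left distrib_left)
  also have "P * f 0 = tz a q z (Suc k)" unfolding P_def f_def tz_def a0 by simp
  also have "(\<Sum>i\<le>k. P * f (Suc i)) = (\<Sum>i\<le>k. \<alpha> (Suc i) * ss a q z i (k - i))"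
    by (rule sum.cong) (auto simp: ss_eq P_def f_def)
  finally show ?thesis .
qed

lemma pair_sums:
  assumes bp: "bailey_pair a q \<alpha> \<beta>" and sA: "summable (\<lambda>n. norm (aterm z a q \<alpha> (Suc n)))"
  shows "(\<lambda>n. bterm z a q \<beta> (Suc n)) sums ((\<Sum>n. tz a q z (Suc n)) + (\<Sum>n. aterm z a q \<alpha> (Suc n)))"
proof -
  define T where "T i K = ccf a q z (Suc i) - (\<Sum>m<K. ss a q z i m)" for i K
  define x where "x = q*a/z"
  have part: "(\<Sum>k<N. bterm z a q \<beta> (Suc k)) = (\<Sum>k<N. tz a q z (Suc k)) + (\<Sum>i<N. aterm z a q \<alpha> (Suc i))
      - (\<Sum>i<N. \<alpha> (Suc i) * T i (N - i))" for N
  proof -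
    have "(\<Sum>k<N. bterm z a q \<beta> (Suc k)) = (\<Sum>k<N. tz a q z (Suc k)) + (\<Sum>k<N. \<Sum>i\<le>k. \<alpha> (Suc i) * ss a q z i (k - i))"
      by (simp add: bterm_eq[OF bp] sum.distrib)
    also have "(\<Sum>k<N. \<Sum>i\<le>k. \<alpha> (Suc i) * ss a q z i (k - i)) = (\<Sum>i<N. \<Sum>m<N - i. \<alpha> (Suc i) * ss a q z i m)"
      by (rule swap_tri)
    also have "\<dots> = (\<Sum>i<N. \<alpha> (Suc i) * ccf a q z (Suc i) - \<alpha> (Suc i) * T i (N - i))"
      by (rule sum.cong) (auto simp: T_def sum_distrib_left algebra_simps)
    also have "\<dots> = (\<Sum>i<N. aterm z a q \<alpha> (Suc i)) - (\<Sum>i<N. \<alpha> (Suc i) * T i (N - i))"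
      by (simp add: sum_subtractf aterm_eq)
    finally show ?thesis by simp
  qed
  define C where "C = Mb / (1 - norm x)"
  define cp where "cp N = (\<Sum>i\<le>N. norm (aterm z a q \<alpha> (Suc i)) * norm x ^ (N - i))" for N
  have xn: "norm x < 1" unfolding x_def by (rule xnorm)
  have Cnn: "0 \<le> C" unfolding C_def using Mb_pos xn by simp
  have cp0: "cp \<longlonglongrightarrow> 0"
  proof -
    have "(\<lambda>k. \<Sum>i\<le>k. norm (aterm z a q \<alpha> (Suc i)) * norm x ^ (k - i)) sums
        ((\<Sum>k. norm (aterm z a q \<alpha> (Suc k))) * (\<Sum>k. norm x ^ k))"
      by (rule Cauchy_product_sums) (use sA xn in \<open>auto intro: summable_geometric\<close>)
    then show ?thesis unfolding cp_def by (intro summable_LIMSEQ_zero sums_summable)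
  qed
  have err: "(\<lambda>N. \<Sum>i<N. \<alpha> (Suc i) * T i (N - i)) \<longlonglongrightarrow> 0"
  proof (rule Lim_null_comparison)
    show "(\<lambda>N. C * cp N) \<longlonglongrightarrow> 0" using tendsto_mult_right_zero[OF cp0] .
    show "eventually (\<lambda>N. norm (\<Sum>i<N. \<alpha> (Suc i) * T i (N - i)) \<le> C * cp N) sequentially"
    proof (rule always_eventually, rule allI)
      fix N
      have "norm (\<Sum>i<N. \<alpha> (Suc i) * T i (N - i)) \<le> (\<Sum>i<N. norm (\<alpha> (Suc i) * T i (N - i)))"
        by (rule norm_sum)
      also have "\<dots> \<le> (\<Sum>i<N. C * (norm (aterm z a q \<alpha> (Suc i)) * norm x ^ (N - i)))"
      proof (rule sum_mono)
        fix i
        have "norm (T i (N - i)) \<le> Mb * norm (ccf a q z (Suc i)) * norm x ^ (N - i) / (1 - norm x)"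
          unfolding T_def x_def by (rule tail_bound)
        then have "norm (\<alpha> (Suc i)) * norm (T i (N - i)) \<le> norm (\<alpha> (Suc i)) * (Mb * norm (ccf a q z (Suc i)) * norm x ^ (N - i) / (1 - norm x))"
          by (rule mult_left_mono) simp
        then show "norm (\<alpha> (Suc i) * T i (N - i)) \<le> C * (norm (aterm z a q \<alpha> (Suc i)) * norm x ^ (N - i))"
          unfolding C_def aterm_eq by (simp add: norm_mult mult_ac)
      qed
      also have "\<dots> = C * (\<Sum>i<N. norm (aterm z a q \<alpha> (Suc i)) * norm x ^ (N - i))"
        by (simp add: sum_distrib_left)
      also have "\<dots> \<le> C * cp N" unfolding cp_def
        by (intro mult_left_mono Cnn sum_mono2) auto
      finally show "norm (\<Sum>i<N. \<alpha> (Suc i) * T i (N - i)) \<le> C * cp N" .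
    qed
  qed
  have s1: "summable (\<lambda>n. tz a q z (Suc n))"
    using summable_norm_cancel[OF tz_summable] by (simp add: summable_Suc_iff)
  have s2: "summable (\<lambda>n. aterm z a q \<alpha> (Suc n))" using summable_norm_cancel[OF sA] .
  have "(\<lambda>N. (\<Sum>k<N. tz a q z (Suc k)) + (\<Sum>i<N. aterm z a q \<alpha> (Suc i)) - (\<Sum>i<N. \<alpha> (Suc i) * T i (N - i)))
     \<longlonglongrightarrow> (\<Sum>n. tz a q z (Suc n)) + (\<Sum>n. aterm z a q \<alpha> (Suc n)) - 0"
    by (intro tendsto_intros summable_LIMSEQ s1 s2 err)
  then show ?thesis unfolding sums_def part by simp
qed

end


context setting
begin

lemma shifted: "setting (a*q^k) q z"
proof
  show "norm q < 1" by (rule q)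
  have "norm (q * (a * q^k)) = norm (q*a) * norm q ^ k" by (simp add: norm_mult norm_power)
  also have "\<dots> \<le> norm (q*a)" using q by (intro mult_left_le) (auto simp: power_le_one)
  finally show "norm (q * (a * q^k)) < norm z" using hz by simp
  fix n
  have "qpoch (a*q) q (k+n) = qpoch (a*q) q k * qpoch (a*q*q^k) q n" by (rule qpoch_add)
  then show "qpoch (a * q^k * q) q n \<noteq> 0" using nzA[of "k+n"] by (auto simp: mult_ac)
  have "qpoch (q*a/z) q (k+n) = qpoch (q*a/z) q k * qpoch (q*a/z*q^k) q n" by (rule qpoch_add)
  then show "qpoch (q * (a*q^k) / z) q n \<noteq> 0" using nzX[of "k+n"] by (auto simp: mult_ac)
qed

lemma tz_diff: "tz a q z (Suc k) - tz (a*q) q z (Suc k) = ss a q z 0 k"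
proof -
  define x where "x = q*a/z"
  define P where "P = qpoch z q (Suc k) * qpoch q q k * x^Suc k / (qpoch q q (Suc k) * qpoch (a*q) q (Suc (Suc k)))"
  have A: "qpoch (a*q) q (Suc (Suc k)) = qpoch (a*q) q (Suc k) * (1 - a*q*q^Suc k)" by (rule qpoch_Suc)
  have B: "qpoch (a*q) q (Suc (Suc k)) = (1 - a*q) * qpoch (a*q*q) q (Suc k)"
    using qpoch_add[of "a*q" q 1 "Suc k"] by (simp add: qpoch_def)
  have f1: "1 - a*q \<noteq> 0" using fA[of 0] by simp
  have f2: "1 - a*q*q^Suc k \<noteq> 0" by (rule fA)
  have t1: "tz a q z (Suc k) = P * (1 - a*q*q^Suc k)"
    unfolding tz_def P_def x_def A using f2 by (simp add: field_simps)
  have f3: "qpoch (a*q*q) q (Suc k) \<noteq> 0" using B nzA[of "Suc (Suc k)"] by auto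
  have t2: "tz (a*q) q z (Suc k) = P * (q^Suc k * (1 - a*q))"
    unfolding tz_def P_def x_def B using f1 f3 by (simp add: field_simps power_mult_distrib)
  have t3: "ss a q z 0 k = P * (1 - q*q^k)"
    unfolding ss_def P_def x_def qpoch_Suc[of q q k] using fQ[of k] by (simp add: field_simps)
  show ?thesis unfolding t1 t2 t3 by (simp add: algebra_simps)
qed

end

definition S0 where "S0 a q z = (\<Sum>n. tz a q z (Suc n))"

lemma (in setting) S0_step: "S0 a q z = ccf a q z 1 + S0 (a*q) q z"
proof -
  interpret s1: setting "a*q" q z using shifted[of 1] by simp
  have a: "summable (\<lambda>n. tz a q z (Suc n))"
    using summable_norm_cancel[OF tz_summable] by (simp add: summable_Suc_iff)
  have b: "summable (\<lambda>n. tz (a*q) q z (Suc n))"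
    using summable_norm_cancel[OF s1.tz_summable] by (simp add: summable_Suc_iff)
  have "(\<lambda>n. tz a q z (Suc n) - tz (a*q) q z (Suc n)) sums (S0 a q z - S0 (a*q) q z)"
    unfolding S0_def by (intro sums_diff summable_sums a b)
  moreover have "(\<lambda>n. tz a q z (Suc n) - tz (a*q) q z (Suc n)) sums ccf a q z 1"
    unfolding tz_diff using ss_sums[of 0] by simp
  ultimately show ?thesis using sums_unique2 by fastforce
qed

lemma (in setting) S0_iter: "S0 a q z = (\<Sum>k<K. ccf (a*q^k) q z 1) + S0 (a*q^K) q z"
proof (induct K)
  case (Suc K)
  interpret sK: setting "a*q^K" q z by (rule shifted)
  show ?case using Suc sK.S0_step by (simp add: mult_ac)
qed simp

context setting
begin

lemma S0_shift_bound: "norm (S0 (a*q^K) q z) \<le>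
   exp (norm z / (1 - norm q)) * exp (1 / (1 - norm q)) * exp (norm (a*q) / (1 - norm q)) / (Lq * La)
   * norm q ^ K * (norm (q*a/z) / (1 - norm (q*a/z)))"
proof -
  define C0 where "C0 = exp (norm z / (1 - norm q)) * exp (1 / (1 - norm q)) * exp (norm (a*q) / (1 - norm q)) / (Lq * La)"
  define x where "x = q*a/z"
  have xn: "norm x < 1" unfolding x_def by (rule xnorm)
  have C0nn: "0 \<le> C0" unfolding C0_def using La Lq by simp
  have bnd: "norm (tz (a*q^K) q z (Suc n)) \<le> C0 * norm q ^ K * norm x ^ Suc n" for n
  proof -
    let ?n = "Suc n"
    have low: "La / exp (norm (a*q) / (1 - norm q)) \<le> norm (qpoch (a*q^K*q) q ?n)"
    proof -
      have "qpoch (a*q) q (K + ?n) = qpoch (a*q) q K * qpoch (a*q^K*q) q ?n"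
        using qpoch_add[of "a*q" q K ?n] by (simp add: mult_ac)
      then have "norm (qpoch (a*q) q (K + ?n)) = norm (qpoch (a*q) q K) * norm (qpoch (a*q^K*q) q ?n)"
        by (simp add: norm_mult)
      moreover have "La \<le> norm (qpoch (a*q) q (K + ?n))" by (rule La)
      moreover have "norm (qpoch (a*q) q K) \<le> exp (norm (a*q) / (1 - norm q))" by (rule qpoch_upper[OF q])
      ultimately have "La \<le> exp (norm (a*q) / (1 - norm q)) * norm (qpoch (a*q^K*q) q ?n)"
        by (metis mult_right_mono norm_ge_zero order_trans)
      then show ?thesis by (simp add: divide_le_eq mult.commute)
    qed
    have n1: "norm (qpoch z q ?n) * norm (qpoch q q n) \<le> exp (norm z / (1 - norm q)) * exp (1 / (1 - norm q))"
      using q by (intro mult_mono qpoch_upper qpoch_upper') auto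
    have den: "Lq * (La / exp (norm (a*q) / (1 - norm q))) \<le> norm (qpoch q q ?n) * norm (qpoch (a*q^K*q) q ?n)"
      using Lq La low by (intro mult_mono) auto
    have fr: "norm (qpoch z q ?n) * norm (qpoch q q n) / (norm (qpoch q q ?n) * norm (qpoch (a*q^K*q) q ?n)) \<le> C0"
    proof -
      have "norm (qpoch z q ?n) * norm (qpoch q q n) / (norm (qpoch q q ?n) * norm (qpoch (a*q^K*q) q ?n))
         \<le> exp (norm z / (1 - norm q)) * exp (1 / (1 - norm q)) / (Lq * (La / exp (norm (a*q) / (1 - norm q))))"
        by (rule frac_le[OF _ n1 _ den]) (use La Lq in auto)
      also have "\<dots> = C0" unfolding C0_def by (simp add: field_simps)
      finally show ?thesis .
    qed
    have xp: "norm (q*(a*q^K)/z) ^ ?n \<le> norm q ^ K * norm x ^ ?n"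
    proof -
      have "norm (q*(a*q^K)/z) ^ ?n = norm x ^ ?n * (norm q ^ K) ^ ?n"
        unfolding x_def by (simp add: norm_mult norm_divide norm_power power_mult_distrib field_simps)
      also have "\<dots> \<le> norm x ^ ?n * norm q ^ K"
      proof -
        have "(norm q ^ K) ^ n \<le> 1" using q by (intro power_le_one) (auto simp: power_le_one)
        then have "norm q ^ K * (norm q ^ K) ^ n \<le> norm q ^ K" by (intro mult_left_le) auto
        then show ?thesis by (intro mult_left_mono) (auto simp: mult_ac)
      qed
      finally show ?thesis by (simp add: mult_ac)
    qed
    have "norm (tz (a*q^K) q z ?n) = norm (qpoch z q ?n) * norm (qpoch q q n) / (norm (qpoch q q ?n) * norm (qpoch (a*q^K*q) q ?n))
        * norm (q*(a*q^K)/z) ^ ?n"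
      unfolding tz_def by (simp add: norm_mult norm_divide norm_power)
    also have "\<dots> \<le> C0 * (norm q ^ K * norm x ^ ?n)"
      by (rule mult_mono[OF fr xp C0nn]) auto
    finally show ?thesis by (simp add: mult_ac)
  qed
  have g: "(\<lambda>n. C0 * norm q ^ K * norm x ^ Suc n) sums (C0 * norm q ^ K * (norm x / (1 - norm x)))"
  proof -
    have "(\<lambda>n. norm x ^ Suc n) sums (norm x * (1 / (1 - norm x)))"
      using sums_mult[OF geometric_sums[of "norm x"], of "norm x"] xn by simp
    from sums_mult[OF this, of "C0 * norm q ^ K"] show ?thesis by simp
  qed
  have "norm (S0 (a*q^K) q z) \<le> (\<Sum>n. C0 * norm q ^ K * norm x ^ Suc n)"
    unfolding S0_def by (rule norm_suminf_le[OF bnd sums_summable[OF g]])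
  also have "\<dots> = C0 * norm q ^ K * (norm x / (1 - norm x))" using sums_unique[OF g] by simp
  finally show ?thesis unfolding C0_def x_def .
qed

lemma S0_sums: "(\<lambda>k. ccf (a*q^k) q z 1) sums S0 a q z"
proof -
  have "(\<lambda>K. S0 (a*q^K) q z) \<longlonglongrightarrow> 0"
  proof (rule Lim_null_comparison[OF always_eventually[OF allI[OF S0_shift_bound]]])
    show "(\<lambda>K. exp (norm z / (1 - norm q)) * exp (1 / (1 - norm q)) * exp (norm (a*q) / (1 - norm q)) / (Lq * La)
       * norm q ^ K * (norm (q*a/z) / (1 - norm (q*a/z)))) \<longlonglongrightarrow> 0"
      using q by (intro tendsto_mult_left_zero tendsto_mult_right_zero LIMSEQ_power_zero) simp
  qed
  then have "(\<lambda>K. S0 a q z - S0 (a*q^K) q z) \<longlonglongrightarrow> S0 a q z - 0"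
    by (intro tendsto_intros)
  moreover have "(\<lambda>K. S0 a q z - S0 (a*q^K) q z) = (\<lambda>K. \<Sum>k<K. ccf (a*q^k) q z 1)"
  proof
    fix K show "S0 a q z - S0 (a*q^K) q z = (\<Sum>k<K. ccf (a*q^k) q z 1)"
      using S0_iter[of K] by (metis add_diff_cancel_right')
  qed
  ultimately show ?thesis unfolding sums_def by simp
qed

end

lemma pf:
  fixes y z :: complex
  assumes "1 - y \<noteq> 0" "1 - z*y \<noteq> 0"
  shows "(1-z)*y/((1-z*y)*(1-y)) = y/(1-y) - z*y/(1-z*y)"
proof -
  have "y/(1-y) - z*y/(1-z*y) = (y*(1-z*y) - z*y*(1-y))/((1-y)*(1-z*y))"
    using assms by (rule diff_frac_eq)
  also have "y*(1-z*y) - z*y*(1-y) = (1-z)*y" by algebra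
  finally show ?thesis by (simp add: mult.commute)
qed
lemma pg:
  fixes y :: complex
  assumes "1 - y \<noteq> 0" "1 + y \<noteq> 0"
  shows "y/(1-y) - y/(1+y) = 2*(y^2/(1-y^2))"
proof -
  have "y/(1-y) - y/(1+y) = (y*(1+y) - y*(1-y))/((1-y)*(1+y))"
    using assms by (rule diff_frac_eq)
  also have "y*(1+y) - y*(1-y) = 2*y^2" by algebra
  also have "(1-y)*(1+y) = 1 - y^2" by algebra
  finally show ?thesis by simp
qed
lemma comb:
  fixes y z :: complex
  assumes a1: "1 - y \<noteq> 0" and a2: "1 + y \<noteq> 0" and a3: "1 - z*y \<noteq> 0" and a4: "1 + z*y \<noteq> 0"
  shows "(1-z)*y/((1-z*y)*(1-y)) + (1-z)*(-y)/((1-z*(-y))*(1-(-y))) - 2*((1-z^2)*y^2/((1-z^2*y^2)*(1-y^2))) = 0"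
proof -
  have "1 - y^2 = (1-y)*(1+y)" by algebra
  then have b1: "1 - y^2 \<noteq> 0" using a1 a2 by simp
  have "1 - z^2*y^2 = (1-z*y)*(1+z*y)" by algebra
  then have b2: "1 - z^2*y^2 \<noteq> 0" using a3 a4 by simp
  have e1: "(1-z)*y/((1-z*y)*(1-y)) = y/(1-y) - z*y/(1-z*y)" by (rule pf[OF a1 a3])
  have e2: "(1-z)*(-y)/((1-z*(-y))*(1-(-y))) = z*y/(1+z*y) - y/(1+y)"
    using pf[of "-y" z] a2 a4 by simp
  have e3: "(1-z^2)*y^2/((1-z^2*y^2)*(1-y^2)) = y^2/(1-y^2) - z^2*y^2/(1-z^2*y^2)"
    using pf[of "y^2" "z^2"] b1 b2 by (simp add: power_mult_distrib mult_ac)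
  have g1: "y/(1-y) - y/(1+y) = 2*(y^2/(1-y^2))" by (rule pg[OF a1 a2])
  have g2: "z*y/(1-z*y) - z*y/(1+z*y) = 2*(z^2*y^2/(1-z^2*y^2))"
    using pg[OF a3 a4] by (simp add: power_mult_distrib)
  have lin: "A - B = 2*F \<Longrightarrow> C - D = 2*G \<Longrightarrow> (A - C) + (D - B) - 2*(F - G) = 0" for A B C D F G :: complex
    by (simp add: algebra_simps)
  show ?thesis unfolding e1 e2 e3 by (rule lin[OF g1 g2])
qed

theorem corollary2p5:
  fixes \<alpha> \<beta> :: "complex \<Rightarrow> complex \<Rightarrow> nat \<Rightarrow> complex" and a q z :: complex
  assumes hq: "norm q < 1"
    and hz: "norm (q * a) < norm z"
    and bp1: "bailey_pair a q (\<alpha> a q) (\<beta> a q)"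
    and bp2: "bailey_pair (- a) q (\<alpha> (- a) q) (\<beta> (- a) q)"
    and bp3: "bailey_pair (a ^ 2) (q ^ 2) (\<alpha> (a ^ 2) (q ^ 2)) (\<beta> (a ^ 2) (q ^ 2))"
    and nz: "\<forall>n. qpoch (a * q) q n \<noteq> 0 \<and> qpoch (- a * q) q n \<noteq> 0
               \<and> qpoch (a ^ 2 * q ^ 2) (q ^ 2) n \<noteq> 0
               \<and> qpoch (q * a / z) q n \<noteq> 0 \<and> qpoch (- q * a / z) q n \<noteq> 0
               \<and> qpoch (q ^ 2 * a ^ 2 / z ^ 2) (q ^ 2) n \<noteq> 0"
    and sB1: "summable (\<lambda>n. norm (bterm z a q (\<beta> a q) (Suc n)))"
    and sB2: "summable (\<lambda>n. norm (bterm z (- a) q (\<beta> (- a) q) (Suc n)))"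
    and sB3: "summable (\<lambda>n. norm (bterm (z ^ 2) (a ^ 2) (q ^ 2) (\<beta> (a ^ 2) (q ^ 2)) (Suc n)))"
    and sA1: "summable (\<lambda>n. norm (aterm z a q (\<alpha> a q) (Suc n)))"
    and sA2: "summable (\<lambda>n. norm (aterm z (- a) q (\<alpha> (- a) q) (Suc n)))"
    and sA3: "summable (\<lambda>n. norm (aterm (z ^ 2) (a ^ 2) (q ^ 2) (\<alpha> (a ^ 2) (q ^ 2)) (Suc n)))"
  shows "(\<Sum>n. bterm z a q (\<beta> a q) (Suc n)) + (\<Sum>n. bterm z (- a) q (\<beta> (- a) q) (Suc n))
           - 2 * (\<Sum>n. bterm (z ^ 2) (a ^ 2) (q ^ 2) (\<beta> (a ^ 2) (q ^ 2)) (Suc n))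
         = (\<Sum>n. aterm z a q (\<alpha> a q) (Suc n)) + (\<Sum>n. aterm z (- a) q (\<alpha> (- a) q) (Suc n))
           - 2 * (\<Sum>n. aterm (z ^ 2) (a ^ 2) (q ^ 2) (\<alpha> (a ^ 2) (q ^ 2)) (Suc n))"
  proof -
  interpret s1: setting a q z using hq hz nz by unfold_locales auto
  interpret s2: setting "-a" q z
  proof
    show "norm q < 1" by (rule hq)
    show "norm (q * - a) < norm z" using hz by simp
    fix n
    show "qpoch (- a * q) q n \<noteq> 0" using nz by auto
    have "q * - a / z = - q * a / z" by simp
    then show "qpoch (q * - a / z) q n \<noteq> 0" using nz by metis
  qed
  interpret s3: setting "a^2" "q^2" "z^2"
  proof
    have "norm q ^ 2 < 1 ^ 2" using hq by (intro power_strict_mono) auto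
    then show "norm (q^2) < 1" by (simp add: norm_power)
    have "norm (q*a) ^ 2 < norm z ^ 2" using hz by (intro power_strict_mono) auto
    then show "norm (q^2 * a^2) < norm (z^2)" by (simp add: norm_power norm_mult power_mult_distrib)
    fix n
    show "qpoch (a^2 * q^2) (q^2) n \<noteq> 0" using nz by auto
    show "qpoch (q^2 * a^2 / z^2) (q^2) n \<noteq> 0" using nz by auto
  qed
  have B1: "(\<Sum>n. bterm z a q (\<beta> a q) (Suc n)) = S0 a q z + (\<Sum>n. aterm z a q (\<alpha> a q) (Suc n))"
    using sums_unique[OF s1.pair_sums[OF bp1 sA1]] unfolding S0_def by simp
  have B2: "(\<Sum>n. bterm z (-a) q (\<beta> (-a) q) (Suc n)) = S0 (-a) q z + (\<Sum>n. aterm z (-a) q (\<alpha> (-a) q) (Suc n))"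
    using sums_unique[OF s2.pair_sums[OF bp2 sA2]] unfolding S0_def by simp
  have B3: "(\<Sum>n. bterm (z^2) (a^2) (q^2) (\<beta> (a^2) (q^2)) (Suc n)) = S0 (a^2) (q^2) (z^2) + (\<Sum>n. aterm (z^2) (a^2) (q^2) (\<alpha> (a^2) (q^2)) (Suc n))"
    using sums_unique[OF s3.pair_sums[OF bp3 sA3]] unfolding S0_def by simp
  have ccf1: "ccf b qq zz 1 = (1-zz)*(qq*b/zz)/((1-qq*b)*(1-qq*b/zz))" for b qq zz
    by (simp add: ccf_def qpoch_def)
  have term0: "ccf (a*q^k) q z 1 + ccf (-a*q^k) q z 1 - 2 * ccf (a^2*(q^2)^k) (q^2) (z^2) 1 = 0" for k
  proof -
    define y where "y = q*(a*q^k)/z"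
    have c1: "ccf (a*q^k) q z 1 = (1-z)*y/((1-z*y)*(1-y))" unfolding ccf1 y_def by simp
    have c2: "ccf (-a*q^k) q z 1 = (1-z)*(-y)/((1-z*(-y))*(1-(-y)))" unfolding ccf1 y_def by simp
    have c3: "ccf (a^2*(q^2)^k) (q^2) (z^2) 1 = (1-z^2)*y^2/((1-z^2*y^2)*(1-y^2))"
      unfolding ccf1 y_def by (simp add: power_mult_distrib power_divide power_mult[symmetric] mult.commute[of 2 k])
    have n1: "1 - y \<noteq> 0" using s1.fX[of k] unfolding y_def by (simp add: mult_ac)
    have n2: "1 + y \<noteq> 0" using s2.fX[of k] unfolding y_def by (simp add: mult_ac)
    have n3: "1 - z*y \<noteq> 0" using s1.fA[of k] unfolding y_def by (simp add: mult_ac)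
    have n4: "1 + z*y \<noteq> 0" using s2.fA[of k] unfolding y_def by (simp add: mult_ac)
    show ?thesis unfolding c1 c2 c3 by (rule comb[OF n1 n2 n3 n4])
  qed
  have "(\<lambda>k. ccf (a*q^k) q z 1 + ccf (-a*q^k) q z 1 - 2 * ccf (a^2*(q^2)^k) (q^2) (z^2) 1)
      sums (S0 a q z + S0 (-a) q z - 2 * S0 (a^2) (q^2) (z^2))"
    by (intro sums_diff sums_add sums_mult s1.S0_sums s2.S0_sums s3.S0_sums)
  moreover have "(\<lambda>k. ccf (a*q^k) q z 1 + ccf (-a*q^k) q z 1 - 2 * ccf (a^2*(q^2)^k) (q^2) (z^2) 1) sums 0"
    unfolding term0 by simp
  ultimately have Z: "S0 a q z + S0 (-a) q z - 2 * S0 (a^2) (q^2) (z^2) = 0" using sums_unique2 by blast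
  show ?thesis unfolding B1 B2 B3 using Z by (simp add: algebra_simps)
qed

end
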